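(* Let $n\ge 3$ and let $C\in\mathbb{R}^{n\times n}$ be nonnegative, doubly stochastic, irreducible, with zero diagonal entries. Let $x(s)$ evolve by the Modified DeGroot-Friedkin model $x(s+1)=C^\top x(s)+X(s)x(s)-C^\top X(s)x(s)$, $X(s)=\mathrm{diag}(x(s))$. Then for every initial condition $x(0)\in\Delta\setminus\{e_1,\dots,e_n\}$, $x(s)\to\tfrac1n\mathbf 1$ as $s\to\infty$.
   Context: $\Delta=\{x\in\mathbb{R}^n: x\ge 0,\ \sum_i x_i=1\}$; $e_i$ is the $i$th standard basis vector; $\mathbf 1$ is the all-ones vector. *)

theory Defs
  imports "HOL-Analysis.Analysis"
begin

definition prob_simplex :: "(real ^ 'n) set" where
  "prob_simplex = {x. (\<forall>i. x $ i \<ge> 0) \<and> (\<Sum>i\<in>UNIV. x $ i) = 1}"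

definition nonneg_matrix :: "real ^ 'n ^ 'n \<Rightarrow> bool" where
  "nonneg_matrix C \<longleftrightarrow> (\<forall>i j. C $ i $ j \<ge> 0)"

definition doubly_stochastic :: "real ^ 'n ^ 'n \<Rightarrow> bool" where
  "doubly_stochastic C \<longleftrightarrow> nonneg_matrix C \<and>
     (\<forall>i. (\<Sum>j\<in>UNIV. C $ i $ j) = 1) \<and> (\<forall>j. (\<Sum>i\<in>UNIV. C $ i $ j) = 1)"

definition irreducible_matrix :: "real ^ 'n ^ 'n \<Rightarrow> bool" where
  "irreducible_matrix C \<longleftrightarrow> (\<forall>i j. (i, j) \<in> {(a, b). C $ a $ b > 0}\<^sup>*)"

definition diag_mat :: "real ^ 'n \<Rightarrow> real ^ 'n ^ 'n" where
  "diag_mat x = (\<chi> i j. if i = j then x $ i else 0)"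

definition mdf_step :: "real ^ 'n ^ 'n \<Rightarrow> real ^ 'n \<Rightarrow> real ^ 'n" where
  "mdf_step C x = transpose C *v x + diag_mat x *v x - transpose C *v (diag_mat x *v x)"

end

theory Submission
  imports Defs
begin


definition hh :: "real \<Rightarrow> real" where "hh t = t * (1 - t)"

lemma step_comp:
  "mdf_step C x $ i = (x $ i)^2 + (\<Sum>j\<in>UNIV. C $ j $ i * hh (x $ j))"
proof -
  have e: "\<And>k j. (if k = j then x$k else 0) * x$j = (if k=j then x$k*x$j else 0)" by simp
  have d: "diag_mat x *v x = (\<chi> k. x$k * x$k)"
    unfolding diag_mat_def matrix_vector_mult_def by (simp add: e vec_eq_iff)
  show ?thesis
    unfolding mdf_step_def hh_def d
    by (simp add: matrix_vector_mult_def transpose_def power2_eq_square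
        algebra_simps sum_subtractf sum.distrib flip: sum_distrib_left)
qed

definition Mx :: "real ^ 'n \<Rightarrow> real" where "Mx x = Max (range (\<lambda>i. x $ i))"

lemma Mx_ge: "x $ i \<le> Mx x"
  unfolding Mx_def by (rule Max_ge) auto

lemma Mx_in: "\<exists>i. x $ i = Mx x"
proof -
  have "Mx x \<in> range (\<lambda>i. x $ i)" unfolding Mx_def by (rule Max_in) auto
  then show ?thesis by auto
qed

lemma Mx_le: "(\<And>i. x $ i \<le> b) \<Longrightarrow> Mx x \<le> b"
  unfolding Mx_def by (subst Max_le_iff) auto

lemma Mx_lip: "Mx x \<le> Mx y + dist x y"
proof (rule Mx_le)
  fix i
  have "x $ i - y $ i \<le> dist x y"
    using component_le_norm_cart[of "x - y" i] by (simp add: dist_norm)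
  then show "x $ i \<le> Mx y + dist x y" using Mx_ge[of y i] by linarith
qed

lemma simplex_le1:
  assumes "x \<in> prob_simplex" shows "x $ i \<le> 1" "0 \<le> x $ i"
proof -
  have "x $ i \<le> (\<Sum>j\<in>UNIV. x $ j)"
    by (rule member_le_sum) (use assms in \<open>auto simp: prob_simplex_def\<close>)
  then show "x $ i \<le> 1" using assms by (simp add: prob_simplex_def)
  show "0 \<le> x $ i" using assms by (simp add: prob_simplex_def)
qed

lemma simplex_two:
  assumes "x \<in> prob_simplex" "i \<noteq> j" shows "x $ i + x $ j \<le> 1"
proof -
  have "(\<Sum>k\<in>{i,j}. x $ k) \<le> (\<Sum>k\<in>UNIV. x $ k)"
    by (rule sum_mono2) (use assms in \<open>auto simp: prob_simplex_def\<close>)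
  then show ?thesis using assms by (simp add: prob_simplex_def)
qed

lemma step_simplex:
  assumes ds: "doubly_stochastic C" and x: "x \<in> prob_simplex"
  shows "mdf_step C x \<in> prob_simplex"
proof -
  have nn: "C $ i $ j \<ge> 0" for i j using ds by (simp add: doubly_stochastic_def nonneg_matrix_def)
  have hnn: "hh (x $ j) \<ge> 0" for j using simplex_le1[OF x, of j] by (simp add: hh_def)
  have rows: "(\<Sum>i\<in>UNIV. C $ j $ i) = 1" for j using ds by (simp add: doubly_stochastic_def)
  have "(\<Sum>i\<in>UNIV. mdf_step C x $ i) = (\<Sum>i\<in>UNIV. (x$i)^2) + (\<Sum>i\<in>UNIV. \<Sum>j\<in>UNIV. C $ j $ i * hh (x $ j))"
    by (simp add: step_comp sum.distrib)
  also have "(\<Sum>i\<in>UNIV. \<Sum>j\<in>UNIV. C $ j $ i * hh (x $ j)) = (\<Sum>j\<in>UNIV. hh (x $ j))"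
    by (subst sum.swap) (simp add: rows flip: sum_distrib_right)
  also have "(\<Sum>i\<in>UNIV. (x$i)^2) + (\<Sum>j\<in>UNIV. hh (x $ j)) = (\<Sum>i\<in>UNIV. x $ i)"
    by (simp add: hh_def power2_eq_square algebra_simps flip: sum.distrib)
  finally have "(\<Sum>i\<in>UNIV. mdf_step C x $ i) = 1" using x by (simp add: prob_simplex_def)
  moreover have "mdf_step C x $ i \<ge> 0" for i
    unfolding step_comp by (intro add_nonneg_nonneg sum_nonneg mult_nonneg_nonneg nn hnn) simp
  ultimately show ?thesis by (simp add: prob_simplex_def)
qed

lemma hh_le:
  assumes x: "x \<in> prob_simplex" shows "hh (x $ j) \<le> hh (Mx x)"
proof -
  obtain i where i: "x $ i = Mx x" using Mx_in by blast
  show ?thesis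
  proof (cases "j = i")
    case True then show ?thesis using i by simp
  next
    case False
    have a: "x $ j + Mx x \<le> 1" using simplex_two[OF x False] i by simp
    have b: "x $ j \<le> Mx x" by (rule Mx_ge)
    have "0 \<le> (Mx x - x $ j) * (1 - Mx x - x $ j)" using a b by simp
    then show ?thesis by (simp add: hh_def algebra_simps)
  qed
qed

lemma step_le:
  assumes ds: "doubly_stochastic C" and x: "x \<in> prob_simplex"
  shows "mdf_step C x $ i \<le> Mx x"
proof -
  have nn: "C $ i $ j \<ge> 0" for i j using ds by (simp add: doubly_stochastic_def nonneg_matrix_def)
  have cols: "(\<Sum>j\<in>UNIV. C $ j $ i) = 1" for i using ds by (simp add: doubly_stochastic_def)
  have "(\<Sum>j\<in>UNIV. C $ j $ i * hh (x $ j)) \<le> (\<Sum>j\<in>UNIV. C $ j $ i * hh (Mx x))"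
    by (intro sum_mono mult_left_mono hh_le x nn)
  also have "\<dots> = hh (Mx x)" by (simp add: cols flip: sum_distrib_right)
  finally have 1: "(\<Sum>j\<in>UNIV. C $ j $ i * hh (x $ j)) \<le> hh (Mx x)" .
  have "(x $ i)^2 \<le> (Mx x)^2"
    using simplex_le1[OF x, of i] Mx_ge[of x i] by (intro power_mono) auto
  then show ?thesis using 1 by (simp add: step_comp hh_def power2_eq_square algebra_simps)
qed

lemma step_eq:
  assumes ds: "doubly_stochastic C" and x: "x \<in> prob_simplex"
    and e: "mdf_step C x $ i = Mx x"
  shows "x $ i = Mx x" "\<And>j. C $ j $ i > 0 \<Longrightarrow> hh (x $ j) = hh (Mx x)"
proof -
  have nn: "C $ i $ j \<ge> 0" for i j using ds by (simp add: doubly_stochastic_def nonneg_matrix_def)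
  have cols: "(\<Sum>j\<in>UNIV. C $ j $ i) = 1" for i using ds by (simp add: doubly_stochastic_def)
  have S: "(\<Sum>j\<in>UNIV. C $ j $ i * (hh (Mx x) - hh (x $ j))) = hh (Mx x) - (\<Sum>j\<in>UNIV. C $ j $ i * hh (x $ j))"
    by (simp add: right_diff_distrib sum_subtractf cols flip: sum_distrib_right)
  have T: "(\<Sum>j\<in>UNIV. C $ j $ i * (hh (Mx x) - hh (x $ j))) \<ge> 0"
    by (intro sum_nonneg mult_nonneg_nonneg nn) (use hh_le[OF x] in auto)
  have x0: "0 \<le> x $ i" "x $ i \<le> Mx x" using simplex_le1[OF x, of i] Mx_ge[of x i] by auto
  have "(x $ i)^2 \<le> (Mx x)^2"
    using x0 by (intro power_mono) auto
  with e S T have sq: "(x $ i)^2 = (Mx x)^2" and S0: "(\<Sum>j\<in>UNIV. C $ j $ i * (hh (Mx x) - hh (x $ j))) = 0"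
    by (auto simp: step_comp hh_def power2_eq_square algebra_simps)
  show "x $ i = Mx x" using power2_eq_iff[of "x$i" "Mx x"] sq x0 by linarith
  fix j assume c: "C $ j $ i > 0"
  have "\<forall>j\<in>UNIV. C $ j $ i * (hh (Mx x) - hh (x $ j)) = 0"
    using S0 by (subst (asm) sum_nonneg_eq_0_iff) (auto intro!: mult_nonneg_nonneg nn simp: hh_le[OF x])
  then show "hh (x $ j) = hh (Mx x)" using c by (metis less_irrefl UNIV_I mult_eq_0_iff right_minus_eq)
qed



lemma rtrancl_cross:
  assumes "(a, b) \<in> R\<^sup>*" "a \<notin> A" "b \<in> A"
  shows "\<exists>u v. (u, v) \<in> R \<and> u \<notin> A \<and> v \<in> A"
  using assms
proof (induction rule: rtrancl_induct)
  case base then show ?case by simp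
next
  case (step y z) then show ?case by (cases "y \<in> A") auto
qed

lemma hh_eq: "hh a = hh L \<Longrightarrow> a = L \<or> a = 1 - L"
proof -
  assume "hh a = hh L"
  then have "(L - a) * (1 - L - a) = 0" by (simp add: hh_def algebra_simps)
  then show ?thesis by auto
qed

lemma key:
  fixes C :: "real ^ 'n ^ 'n" and p :: "real ^ 'n"
  assumes n3: "CARD('n) \<ge> 3" and ds: "doubly_stochastic C" and irr: "irreducible_matrix C"
    and d0: "\<forall>i. C $ i $ i = 0" and p: "p \<in> prob_simplex" and L1: "L < 1"
    and hML: "\<forall>k. Mx ((mdf_step C ^^ k) p) = L"
  shows "p = (\<chi> i. 1 / real CARD('n))"
proof -
  define q where "q k = (mdf_step C ^^ k) p" for k
  have qS: "q (Suc k) = mdf_step C (q k)" for k by (simp add: q_def)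
  have q0: "q 0 = p" by (simp add: q_def)
  have qs: "q k \<in> prob_simplex" for k
    by (induction k) (simp_all add: qS q0 p step_simplex[OF ds])
  have qM: "Mx (q k) = L" for k using hML by (simp add: q_def)
  have nn: "C $ i $ j \<ge> 0" for i j using ds by (simp add: doubly_stochastic_def nonneg_matrix_def)
  have cols: "(\<Sum>j\<in>UNIV. C $ j $ i) = 1" for i using ds by (simp add: doubly_stochastic_def)
  define A where "A k = {i. q k $ i = L}" for k
  have Amono: "A (Suc k) \<subseteq> A k" for k
  proof
    fix i assume "i \<in> A (Suc k)"
    then have "mdf_step C (q k) $ i = Mx (q k)" by (simp add: A_def qS qM)
    from step_eq(1)[OF ds qs this] show "i \<in> A k" by (simp add: A_def qM)
  qed
  have inn: "hh (q k $ j) = hh L" if "i \<in> A (Suc k)" "C $ j $ i > 0" for i j k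
  proof -
    have "mdf_step C (q k) $ i = Mx (q k)" using that by (simp add: A_def qS qM)
    from step_eq(2)[OF ds qs this that(2)] show ?thesis by (simp add: qM)
  qed
  have Ane: "\<exists>i. i \<in> A k" for k using Mx_in[of "q k"] by (auto simp: A_def qM)
  have qle: "q k $ i \<le> L" for k i using Mx_ge[of "q k" i] qM by simp
  have q0le: "0 \<le> q k $ i" for k i using simplex_le1[OF qs] by simp
  have L0: "0 \<le> L" using qle q0le order_trans by blast
  have R: "(i, j) \<in> {(a, b). C $ a $ b > 0}\<^sup>*" for i j using irr by (simp add: irreducible_matrix_def)
  show ?thesis
  proof (cases "L \<le> 1/2")
    case True
    obtain K where K: "\<forall>k. card (A K) \<le> card (A k)"
      using ex_has_least_nat[of "\<lambda>k. True" 0 "\<lambda>k. card (A k)"] by auto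
    have AK: "A (Suc K) = A K"
    proof (rule card_subset_eq)
      show "finite (A K)" by simp
      show "A (Suc K) \<subseteq> A K" by (rule Amono)
      show "card (A (Suc K)) = card (A K)"
        using K[rule_format, of "Suc K"] card_mono[OF _ Amono[of K]] by simp
    qed
    have closed: "j \<in> A K" if "i \<in> A K" "C $ j $ i > 0" for i j
    proof -
      have "hh (q K $ j) = hh L" using inn[of i K j] that AK by simp
      then have "q K $ j = L \<or> q K $ j = 1 - L" by (rule hh_eq)
      then show ?thesis using True qle[of K j] by (auto simp: A_def)
    qed
    have AU: "A K = UNIV"
    proof (rule ccontr)
      assume "A K \<noteq> UNIV"
      then obtain j where j: "j \<notin> A K" by auto
      obtain i where i: "i \<in> A K" using Ane by auto
      from rtrancl_cross[OF R[of j i] j i] closed show False by auto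
    qed
    then have all: "q K $ j = L" for j by (auto simp: A_def)
    have "1 = (\<Sum>j\<in>UNIV. q K $ j)" using qs[of K] by (simp add: prob_simplex_def)
    also have "\<dots> = real CARD('n) * L" by (simp add: all)
    finally have Ln: "L = 1 / real CARD('n)" using n3 by (simp add: field_simps)
    have "(\<Sum>i\<in>UNIV. L - p $ i) = 0"
      using p Ln n3 by (simp add: sum_subtractf prob_simplex_def)
    then have "\<forall>i\<in>UNIV. L - p $ i = 0"
      by (subst (asm) sum_nonneg_eq_0_iff) (use qle[of 0] q0 in auto)
    then show ?thesis using Ln by (simp add: vec_eq_iff)
  next
    case False
    then have Lh: "1/2 < L" by simp
    obtain i where i2: "i \<in> A 2" using Ane by blast
    have i1: "i \<in> A 1" using i2 Amono[of 1] by (auto simp: numeral_2_eq_2)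
    have i0: "i \<in> A 0" using i1 Amono[of 0] by auto
    obtain j where j: "C $ j $ i > 0"
    proof (rule ccontr)
      assume "\<not> thesis"
      then have "\<forall>j. C $ j $ i \<le> 0" using that by (meson not_le)
      then have "(\<Sum>j\<in>UNIV. C $ j $ i) = 0" using nn by (intro sum.neutral) (meson order_antisym)
      then show False using cols by simp
    qed
    have ji: "j \<noteq> i" using j d0 by auto
    have hL: "hh L > 0" using Lh L1 by (simp add: hh_def)
    have qj: "q k $ j = 1 - L" if "i \<in> A (Suc k)" for k
    proof -
      have "hh (q k $ j) = hh L" using inn[OF that j] .
      then have "q k $ j = L \<or> q k $ j = 1 - L" by (rule hh_eq)
      moreover have "i \<in> A k" using that Amono by blast
      then have "q k $ j + L \<le> 1" using simplex_two[OF qs ji, of k] by (simp add: A_def)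
      ultimately show ?thesis using Lh by auto
    qed
    have ql: "q k $ l = 0" if "i \<in> A (Suc k)" "l \<noteq> i" "l \<noteq> j" for k l
    proof -
      have ik: "q k $ i = L" using that(1) Amono by (auto simp: A_def)
      have "(\<Sum>m\<in>{i,j,l}. q k $ m) \<le> (\<Sum>m\<in>UNIV. q k $ m)"
        by (rule sum_mono2) (auto simp: q0le)
      then have "q k $ i + q k $ j + q k $ l \<le> 1"
        using qs[of k] that ji by (simp add: prob_simplex_def)
      then show ?thesis using qj[OF that(1)] ik q0le[of k l] by simp
    qed
    have out0: "C $ i $ l = 0 \<and> C $ j $ l = 0" if "l \<noteq> i" "l \<noteq> j" for l
    proof -
      have "q 1 $ l = 0" using ql[of 1 l] i2 that by (simp add: numeral_2_eq_2)
      moreover have "q 0 $ l = 0" using ql[of 0 l] i1 that by simp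
      ultimately have S0: "(\<Sum>m\<in>UNIV. C $ m $ l * hh (q 0 $ m)) = 0"
        using qS[of 0] step_comp[of C "q 0" l] by simp
      have hnn: "hh (q 0 $ m) \<ge> 0" for m using simplex_le1[OF qs, of 0 m] by (simp add: hh_def)
      have "\<forall>m\<in>UNIV. C $ m $ l * hh (q 0 $ m) = 0"
        using S0 by (subst (asm) sum_nonneg_eq_0_iff) (auto intro!: mult_nonneg_nonneg nn hnn)
      moreover have "hh (q 0 $ i) = hh L" using i0 by (simp add: A_def)
      moreover have "hh (q 0 $ j) = hh L" using inn[OF _ j, of 0] i1 by simp
      ultimately show ?thesis using hL by (metis UNIV_I mult_eq_0_iff less_irrefl)
    qed
    have "card {i, j} < CARD('n)" using n3 ji by simp
    then obtain l where l: "l \<notin> {i, j}"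
      by (metis UNIV_I card_mono finite leD subsetI)
    from rtrancl_cross[OF R[of i l], of "- {i, j}"] l
    obtain u v where "C $ u $ v > 0" "u \<in> {i, j}" "v \<notin> {i, j}" by auto
    with out0 show ?thesis by auto
  qed
qed



lemma step_tendsto:
  assumes "(f \<longlongrightarrow> a) F"
  shows "((\<lambda>m. mdf_step C (f m)) \<longlongrightarrow> mdf_step C a) F"
proof (rule vec_tendstoI)
  fix i
  have t: "((\<lambda>m. f m $ j) \<longlongrightarrow> a $ j) F" for j using assms by (rule tendsto_vec_nth)
  show "((\<lambda>m. mdf_step C (f m) $ i) \<longlongrightarrow> mdf_step C a $ i) F"
    unfolding step_comp hh_def by (intro tendsto_intros t)
qed

lemma funpow_tendsto:
  assumes "(f \<longlongrightarrow> a) F"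
  shows "((\<lambda>m. (mdf_step C ^^ k) (f m)) \<longlongrightarrow> (mdf_step C ^^ k) a) F"
proof (induction k)
  case 0 then show ?case using assms by simp
next
  case (Suc k)
  have "((\<lambda>m. mdf_step C ((mdf_step C ^^ k) (f m))) \<longlongrightarrow> mdf_step C ((mdf_step C ^^ k) a)) F"
    by (rule step_tendsto[OF Suc.IH])
  then show ?case by simp
qed

lemma Mx_tendsto:
  assumes "(f \<longlongrightarrow> a) F"
  shows "((\<lambda>m. Mx (f m)) \<longlongrightarrow> Mx a) F"
proof (rule LIM_zero_cancel, rule Lim_null_comparison)
  show "\<forall>\<^sub>F m in F. norm (Mx (f m) - Mx a) \<le> dist (f m) a"
  proof (rule always_eventually, rule allI)
    fix m show "norm (Mx (f m) - Mx a) \<le> dist (f m) a"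
      using Mx_lip[of "f m" a] Mx_lip[of a "f m"] by (simp add: dist_commute abs_le_iff real_norm_def)
  qed
  show "((\<lambda>m. dist (f m) a) \<longlongrightarrow> 0) F" using assms by (rule tendsto_dist_iff[THEN iffD1])
qed

theorem theorem4:
  fixes C :: "real ^ 'n ^ 'n" and x :: "nat \<Rightarrow> real ^ 'n"
  assumes "CARD('n) \<ge> 3"
    and "nonneg_matrix C"
    and "doubly_stochastic C"
    and "irreducible_matrix C"
    and "\<forall>i. C $ i $ i = 0"
    and "\<forall>s. x (Suc s) = mdf_step C (x s)"
    and "x 0 \<in> prob_simplex - {axis i 1 | i. True}"
  shows "x \<longlonglongrightarrow> (\<chi> i. 1 / real CARD('n))"
proof (rule ccontr)
  note n3 = assms(1) and ds = assms(3) and irr = assms(4) and d0 = assms(5)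
  define c :: "real ^ 'n" where "c = (\<chi> i. 1 / real CARD('n))"
  assume nt: "\<not> x \<longlonglongrightarrow> (\<chi> i. 1 / real CARD('n))"
  have xS: "x (Suc s) = mdf_step C (x s)" for s using assms(6) by simp
  have x0: "x 0 \<in> prob_simplex" using assms(7) by simp
  have xs: "x s \<in> prob_simplex" for s
    by (induction s) (simp_all add: xS x0 step_simplex[OF ds])
  have xk: "x (s + k) = (mdf_step C ^^ k) (x s)" for s k
    by (induction k) (simp_all add: xS)
  define m where "m s = Mx (x s)" for s
  have dec: "decseq m"
    unfolding decseq_Suc_iff m_def xS by (intro allI Mx_le step_le[OF ds xs])
  have mge: "0 \<le> m s" for s using simplex_le1(2)[OF xs, of s] Mx_ge[of "x s"] unfolding m_def
    by (meson order_trans)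
  obtain L where mL: "m \<longlonglongrightarrow> L" and Lle: "\<forall>i. L \<le> m i"
    using decseq_convergent[OF dec, of 0] mge by blast
  have m01: "m 0 < 1"
  proof -
    have le: "m 0 \<le> 1" unfolding m_def by (intro Mx_le simplex_le1(1)[OF x0])
    have "m 0 \<noteq> 1"
    proof
      assume h: "m 0 = 1"
      obtain i where i: "x 0 $ i = 1" using Mx_in[of "x 0"] h unfolding m_def by auto
      have "x 0 $ j = 0" if "j \<noteq> i" for j
        using simplex_two[OF x0 that] i simplex_le1(2)[OF x0, of j] by simp
      then have "x 0 = axis i 1" using i by (auto simp: vec_eq_iff axis_def)
      then show False using assms(7) by auto
    qed
    with le show ?thesis by simp
  qed
  have L1: "L < 1" using Lle m01 by (meson le_less_trans)
  have "\<not> (\<forall>e>0. eventually (\<lambda>s. dist (x s) c < e) sequentially)"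
    using nt unfolding tendsto_iff c_def by simp
  then obtain e where e: "e > 0" and ne: "\<not> eventually (\<lambda>s. dist (x s) c < e) sequentially"
    by auto
  obtain r :: "nat \<Rightarrow> nat" where rr: "strict_mono r \<and> (\<forall>n. \<not> dist (x (r n)) c < e)"
    using not_eventually_sequentiallyD[OF ne] by blast
  then have r: "strict_mono r" and rd: "\<And>n. \<not> dist (x (r n)) c < e" by auto
  have nb: "norm (x s) \<le> 1" for s
  proof -
    have "norm (x s) \<le> (\<Sum>i\<in>UNIV. \<bar>x s $ i\<bar>)" by (rule norm_le_l1_cart)
    also have "\<dots> = 1" using xs[of s] by (simp add: prob_simplex_def)
    finally show ?thesis .
  qed
  have bd: "bounded (range (x \<circ> r))" unfolding bounded_iff using nb by auto
  obtain p and r2 :: "nat \<Rightarrow> nat" where r2: "strict_mono r2" and pl: "((x \<circ> r) \<circ> r2) \<longlonglongrightarrow> p"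
    using bounded_imp_convergent_subsequence[OF bd] by auto
  define \<sigma> where "\<sigma> = r \<circ> r2"
  have sm: "strict_mono \<sigma>" unfolding \<sigma>_def using r r2 by (rule strict_mono_o)
  have pl': "(\<lambda>n. x (\<sigma> n)) \<longlonglongrightarrow> p" using pl by (simp add: \<sigma>_def o_def)
  have pS: "p \<in> prob_simplex"
  proof -
    have ci: "(\<lambda>n. x (\<sigma> n) $ i) \<longlonglongrightarrow> p $ i" for i using pl' by (rule tendsto_vec_nth)
    have p0: "0 \<le> p $ i" for i
      by (rule LIMSEQ_le_const[OF ci]) (use simplex_le1(2)[OF xs] in auto)
    have "(\<lambda>n. \<Sum>i\<in>UNIV. x (\<sigma> n) $ i) \<longlonglongrightarrow> (\<Sum>i\<in>UNIV. p $ i)"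
      by (intro tendsto_sum ci)
    then have "(\<lambda>n. 1::real) \<longlonglongrightarrow> (\<Sum>i\<in>UNIV. p $ i)"
      using xs by (simp add: prob_simplex_def)
    then have "1 = (\<Sum>i\<in>UNIV. p $ i)" by (rule LIMSEQ_unique[OF tendsto_const])
    with p0 show ?thesis by (simp add: prob_simplex_def)
  qed
  have "Mx ((mdf_step C ^^ k) p) = L" for k
  proof -
    have a: "(\<lambda>n. Mx ((mdf_step C ^^ k) (x (\<sigma> n)))) \<longlonglongrightarrow> Mx ((mdf_step C ^^ k) p)"
      by (intro Mx_tendsto funpow_tendsto pl')
    have sk: "strict_mono (\<lambda>n. \<sigma> n + k)" using sm by (simp add: strict_mono_def)
    have "(m \<circ> (\<lambda>n. \<sigma> n + k)) \<longlonglongrightarrow> L" by (rule LIMSEQ_subseq_LIMSEQ[OF mL sk])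
    then have b: "(\<lambda>n. Mx ((mdf_step C ^^ k) (x (\<sigma> n)))) \<longlonglongrightarrow> L"
      by (simp add: o_def m_def xk)
    show ?thesis using LIMSEQ_unique[OF a b] .
  qed
  then have pc: "p = c" unfolding c_def by (intro key[OF n3 ds irr d0 pS L1]) auto
  have "(\<lambda>n. dist (x (\<sigma> n)) c) \<longlonglongrightarrow> dist p c" by (intro tendsto_intros pl')
  moreover have "e \<le> dist (x (\<sigma> n)) c" for n using rd[of "r2 n"] by (simp add: \<sigma>_def not_less)
  ultimately have "e \<le> dist p c" by (intro LIMSEQ_le_const) auto
  with pc e show False by simp
qed

end
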